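(* Let $\mathbb{K}$ be a positive commutative monoid and let $H$ be a hypergraph. If $H$ has the local-to-global consistency property for $\mathbb{K}$-relations, then for every subset $W$ of the set of vertices of $H$, the hypergraph $R(H[W])$ also has the local-to-global consistency property for $\mathbb{K}$-relations.
   Context: A commutative monoid $\mathbb{K}=(K,+,0)$ is positive if $p+q=0$ implies $p=q=0$. Attributes have domains; for a finite attribute set $X$, an $X$-tuple assigns each $A\in X$ a value in its domain; $t[Y]$ is restriction. A $\mathbb{K}$-relation over $X$ is a finitely supported function $R$ from $X$-tuples to $K$ (support $R'$); marginals are $R[Y](t)=\sum_{r\in R',r[Y]=t}R(r)$. For a hypergraph with hyperedges $X_1,\dots,X_m$ (vertices as attributes), a collection $R_1(X_1),\dots,R_m(X_m)$ is pairwise consistent if every two $R_i,R_j$ have a $\mathbb{K}$-relation $W$ over $X_i\cup X_j$ with $W[X_i]=R_i$, $W[X_j]=R_j$, and globally consistent if some $W$ over $X_1\cup\dots\cup X_m$ has $W[X_i]=R_i$ for all $i$. A hypergraph has the local-to-global consistency property for $\mathbb{K}$-relations if every pairwise consistent collection of $\mathbb{K}$-relations over its hyperedges is globally consistent. For $H=(V,E)$ and $W\subseteq V$, $H[W]$ is the hypergraph with vertex set $W$ and hyperedges the non-empty sets $X\cap W$, $X\in E$. The reduction $R(H)$ of a hypergraph $H$ has the same vertices and as hyperedges those hyperedges of $H$ not contained in any other hyperedge of $H$. *)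

theory Defs
  imports Main "HOL-Library.FuncSet"
begin

definition positive_monoid :: "'k::comm_monoid_add itself \<Rightarrow> bool" where
  "positive_monoid _ \<longleftrightarrow> (\<forall>p q::'k. p + q = 0 \<longrightarrow> p = 0 \<and> q = 0)"

definition tuples :: "('a \<Rightarrow> 'v set) \<Rightarrow> 'a set \<Rightarrow> ('a \<Rightarrow> 'v) set" where
  "tuples D X = PiE X D"

definition supp :: "(('a \<Rightarrow> 'v) \<Rightarrow> 'k::zero) \<Rightarrow> ('a \<Rightarrow> 'v) set" where
  "supp R = {t. R t \<noteq> 0}"

text \<open>A K-relation over X: finitely supported function from X-tuples to K
  (represented as a function on all of 'a => 'v that vanishes off the X-tuples).\<close>
definition is_krel :: "('a \<Rightarrow> 'v set) \<Rightarrow> 'a set \<Rightarrow> (('a \<Rightarrow> 'v) \<Rightarrow> 'k::zero) \<Rightarrow> bool" where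
  "is_krel D X R \<longleftrightarrow> finite (supp R) \<and> supp R \<subseteq> tuples D X"

definition marg :: "(('a \<Rightarrow> 'v) \<Rightarrow> 'k::comm_monoid_add) \<Rightarrow> 'a set \<Rightarrow> ('a \<Rightarrow> 'v) \<Rightarrow> 'k" where
  "marg R Y t = (\<Sum>r \<in> {r \<in> supp R. restrict r Y = t}. R r)"

type_synonym 'a hypergraph = "'a set \<times> 'a set set"

definition hypergraph :: "'a hypergraph \<Rightarrow> bool" where
  "hypergraph H \<longleftrightarrow> finite (fst H) \<and> (\<forall>X \<in> snd H. X \<noteq> {} \<and> X \<subseteq> fst H)"

text \<open>A collection of K-relations indexed by the hyperedges: Rs X is over X.\<close>
definition pairwise_consistent ::
  "('a \<Rightarrow> 'v set) \<Rightarrow> 'a set set \<Rightarrow> ('a set \<Rightarrow> ('a \<Rightarrow> 'v) \<Rightarrow> 'k::comm_monoid_add) \<Rightarrow> bool" where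
  "pairwise_consistent D E Rs \<longleftrightarrow>
     (\<forall>X \<in> E. \<forall>Y \<in> E. \<exists>W. is_krel D (X \<union> Y) W \<and> marg W X = Rs X \<and> marg W Y = Rs Y)"

definition globally_consistent ::
  "('a \<Rightarrow> 'v set) \<Rightarrow> 'a set set \<Rightarrow> ('a set \<Rightarrow> ('a \<Rightarrow> 'v) \<Rightarrow> 'k::comm_monoid_add) \<Rightarrow> bool" where
  "globally_consistent D E Rs \<longleftrightarrow>
     (\<exists>W. is_krel D (\<Union>E) W \<and> (\<forall>X \<in> E. marg W X = Rs X))"

definition local_to_global :: "'k::comm_monoid_add itself \<Rightarrow> 'v itself \<Rightarrow> 'a hypergraph \<Rightarrow> bool" where
  "local_to_global _ _ H \<longleftrightarrow>
     (\<forall>(D :: 'a \<Rightarrow> 'v set) (Rs :: 'a set \<Rightarrow> ('a \<Rightarrow> 'v) \<Rightarrow> 'k).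
        (\<forall>X \<in> snd H. is_krel D X (Rs X)) \<longrightarrow> pairwise_consistent D (snd H) Rs
        \<longrightarrow> globally_consistent D (snd H) Rs)"

definition induced :: "'a hypergraph \<Rightarrow> 'a set \<Rightarrow> 'a hypergraph" where
  "induced H W = (W, {X \<inter> W | X. X \<in> snd H \<and> X \<inter> W \<noteq> {}})"

definition reduction :: "'a hypergraph \<Rightarrow> 'a hypergraph" where
  "reduction H = (fst H, {X \<in> snd H. \<not> (\<exists>Y \<in> snd H. X \<subset> Y)})"

end

theory Submission
  imports Defs
begin

lemma marg_superset:
  assumes "finite A" "supp R \<subseteq> A"
  shows "marg R Y t = (\<Sum>r \<in> {r \<in> A. restrict r Y = t}. R r)"
  unfolding marg_def
  by (rule sum.mono_neutral_left) (use assms in \<open>auto simp: supp_def\<close>)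

lemma supp_marg:
  "supp (marg R Y) \<subseteq> (\<lambda>r. restrict r Y) ` supp R"
proof
  fix s assume "s \<in> supp (marg R Y)"
  then have "marg R Y s \<noteq> 0" by (simp add: supp_def)
  then have "{r \<in> supp R. restrict r Y = s} \<noteq> {}" unfolding marg_def by force
  then show "s \<in> (\<lambda>r. restrict r Y) ` supp R" by blast
qed

lemma marg_marg:
  assumes fin: "finite (supp R)" and YZ: "Y \<subseteq> Z"
  shows "marg (marg R Z) Y = marg R Y"
proof
  fix t
  have YZ': "Y \<inter> Z = Y" "Z \<inter> Y = Y" using YZ by auto
  let ?I = "(\<lambda>r. restrict r Z) ` supp R"
  have "marg (marg R Z) Y t = (\<Sum>s \<in> {s \<in> ?I. restrict s Y = t}. marg R Z s)"
    by (rule marg_superset) (use fin supp_marg in auto)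
  also have "\<dots> = (\<Sum>s \<in> {s \<in> ?I. restrict s Y = t}.
      sum R {r. r \<in> {r \<in> supp R. restrict r Y = t} \<and> restrict r Z = s})"
  proof (rule sum.cong[OF refl])
    fix s assume "s \<in> {s \<in> ?I. restrict s Y = t}"
    then have "restrict s Y = t" by auto
    then have "{r. r \<in> {r \<in> supp R. restrict r Y = t} \<and> restrict r Z = s}
        = {r \<in> supp R. restrict r Z = s}"
      using YZ by (auto simp: restrict_restrict YZ')
    then show "marg R Z s = sum R {r. r \<in> {r \<in> supp R. restrict r Y = t} \<and> restrict r Z = s}"
      by (simp add: marg_def)
  qed
  also have "\<dots> = sum R {r \<in> supp R. restrict r Y = t}"
    by (rule sum.group) (use fin YZ in \<open>auto simp: restrict_restrict YZ'\<close>)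
  finally show "marg (marg R Z) Y t = marg R Y t" by (simp add: marg_def)
qed

lemma krel_marg:
  assumes "is_krel D Z R" "Y \<subseteq> Z"
  shows "is_krel D Y (marg R Y)"
proof -
  have "supp (marg R Y) \<subseteq> (\<lambda>r. restrict r Y) ` supp R" by (rule supp_marg)
  moreover have "(\<lambda>r. restrict r Y) ` supp R \<subseteq> tuples D Y"
    using assms by (force simp: is_krel_def tuples_def PiE_def Pi_def)
  ultimately show ?thesis using assms
    by (auto simp: is_krel_def intro: finite_subset)
qed

lemma marg_self:
  assumes "is_krel D X R"
  shows "marg R X = R"
proof
  fix t
  have r: "restrict r X = r" if "r \<in> supp R" for r
    using assms that by (auto simp: is_krel_def tuples_def PiE_def extensional_restrict)
  have "{r \<in> supp R. restrict r X = t} = (if t \<in> supp R then {t} else {})"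
    using r by auto
  then show "marg R X t = R t" by (auto simp: marg_def supp_def)
qed

lemma marg_Int:
  assumes "\<And>r a. r \<in> supp R \<Longrightarrow> a \<notin> W \<Longrightarrow> r a = undefined"
  shows "marg R X = marg R (X \<inter> W)"
proof
  fix t
  have "restrict r X = restrict r (X \<inter> W)" if "r \<in> supp R" for r
    using assms[OF that] by (auto simp: restrict_def)
  then have "{r \<in> supp R. restrict r X = t} = {r \<in> supp R. restrict r (X \<inter> W) = t}" by auto
  then show "marg R X t = marg R (X \<inter> W) t" by (simp add: marg_def)
qed

lemma tuples_D':
  "tuples (\<lambda>a. if a \<in> W then D a else {undefined}) X = tuples D (X \<inter> W)"
  unfolding tuples_def PiE_def Pi_def extensional_def
  by (auto split: if_splits)

theorem corollary9:
  fixes H :: "'a hypergraph" and W :: "'a set"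
  assumes "positive_monoid TYPE('k::comm_monoid_add)"
    and "hypergraph H"
    and "local_to_global TYPE('k) TYPE('v) H"
    and "W \<subseteq> fst H"
  shows "local_to_global TYPE('k) TYPE('v) (reduction (induced H W))"
  unfolding local_to_global_def
proof (intro allI impI)
  fix D :: "'a \<Rightarrow> 'v set" and Rs :: "'a set \<Rightarrow> ('a \<Rightarrow> 'v) \<Rightarrow> 'k"
  define E where "E = snd H"
  define Ei where "Ei = {X \<inter> W | X. X \<in> E \<and> X \<inter> W \<noteq> {}}"
  define Er where "Er = {Y \<in> Ei. \<not> (\<exists>Z \<in> Ei. Y \<subset> Z)}"
  have Er_eq: "snd (reduction (induced H W)) = Er"
    by (simp add: Er_def Ei_def E_def reduction_def induced_def)
  assume krel0: "\<forall>X\<in>snd (reduction (induced H W)). is_krel D X (Rs X)"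
    and pc0: "pairwise_consistent D (snd (reduction (induced H W))) Rs"
  have krel: "\<And>Y. Y \<in> Er \<Longrightarrow> is_krel D Y (Rs Y)" using krel0 Er_eq by auto
  have pc: "pairwise_consistent D Er Rs" using pc0 Er_eq by simp
  have ErEi: "Er \<subseteq> Ei" by (auto simp: Er_def)
  have EiW: "\<And>Y. Y \<in> Ei \<Longrightarrow> Y \<subseteq> W" by (auto simp: Ei_def)
  have finEi: "finite Ei"
  proof (rule finite_subset)
    show "Ei \<subseteq> Pow (fst H)" using EiW assms(4) by auto
    show "finite (Pow (fst H))" using assms(2) by (simp add: hypergraph_def)
  qed
  show "globally_consistent D (snd (reduction (induced H W))) Rs"
  proof (cases "Er = {}")
    case True
    have "is_krel D {} (\<lambda>_. 0::'k)" by (simp add: is_krel_def supp_def)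
    then show ?thesis unfolding Er_eq True globally_consistent_def by auto
  next
    case False
    have exY: "\<exists>Y. Y \<in> Er \<and> X \<inter> W \<subseteq> Y" if "X \<in> E" for X
    proof (cases "X \<inter> W = {}")
      case True then show ?thesis using False by auto
    next
      case ne: False
      then have "X \<inter> W \<in> Ei" using that by (auto simp: Ei_def)
      from finite_has_maximal2[OF finEi this] obtain m where
        m: "m \<in> Ei" "X \<inter> W \<subseteq> m" "\<forall>b\<in>Ei. m \<subseteq> b \<longrightarrow> m = b" by blast
      then have "m \<in> Er" unfolding Er_def by auto
      then show ?thesis using m by blast
    qed
    define Ysel where "Ysel X = (SOME Y. Y \<in> Er \<and> X \<inter> W \<subseteq> Y)" for X
    have Ysel: "Ysel X \<in> Er" "X \<inter> W \<subseteq> Ysel X" if "X \<in> E" for X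
      using someI_ex[OF exY[OF that]] unfolding Ysel_def by auto
    have Ysel_eq: "Ysel X = X \<inter> W" if "X \<in> E" "X \<inter> W \<in> Er" for X
    proof -
      have "Ysel X \<in> Ei" using Ysel[OF that(1)] ErEi by auto
      then show ?thesis using that(2) Ysel[OF that(1)] unfolding Er_def by blast
    qed
    define D' where "D' = (\<lambda>a. if a \<in> W then D a else {undefined})"
    define Rs' where "Rs' X = marg (Rs (Ysel X)) (X \<inter> W)" for X
    have krelD': "is_krel D' X R \<longleftrightarrow> is_krel D (X \<inter> W) R" for X and R :: "('a \<Rightarrow> 'v) \<Rightarrow> 'k"
      unfolding is_krel_def D'_def tuples_D' ..
    have undef: "r a = undefined" if "is_krel D Z R" "Z \<subseteq> W" "r \<in> supp R" "a \<notin> W"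
      for Z R r a
      using that by (force simp: is_krel_def tuples_def PiE_def extensional_def)
    have A1: "\<forall>X\<in>snd H. is_krel D' X (Rs' X)"
    proof
      fix X assume "X \<in> snd H"
      then have X: "X \<in> E" by (simp add: E_def)
      have "is_krel D (X \<inter> W) (Rs' X)"
        unfolding Rs'_def by (rule krel_marg[OF krel[OF Ysel(1)[OF X]] Ysel(2)[OF X]])
      then show "is_krel D' X (Rs' X)" using krelD' by simp
    qed
    have A2: "pairwise_consistent D' (snd H) Rs'"
      unfolding pairwise_consistent_def
    proof (intro ballI)
      fix X1 X2 assume "X1 \<in> snd H" "X2 \<in> snd H"
      then have X: "X1 \<in> E" "X2 \<in> E" by (auto simp: E_def)
      let ?Y1 = "Ysel X1" and ?Y2 = "Ysel X2"
      obtain V where V: "is_krel D (?Y1 \<union> ?Y2) V" "marg V ?Y1 = Rs ?Y1" "marg V ?Y2 = Rs ?Y2"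
        using pc Ysel(1)[OF X(1)] Ysel(1)[OF X(2)] unfolding pairwise_consistent_def by blast
      have finV: "finite (supp V)" using V(1) by (simp add: is_krel_def)
      define V' where "V' = marg V ((X1 \<union> X2) \<inter> W)"
      have sub: "(X1 \<union> X2) \<inter> W \<subseteq> ?Y1 \<union> ?Y2" using Ysel(2)[OF X(1)] Ysel(2)[OF X(2)] by auto
      have kV': "is_krel D ((X1 \<union> X2) \<inter> W) V'"
        unfolding V'_def by (rule krel_marg[OF V(1) sub])
      have finV': "finite (supp V')" using kV' by (simp add: is_krel_def)
      have mV': "marg V' X = Rs' X" if "X \<in> {X1, X2}" for X
      proof -
        have XE: "X \<in> E" using that X by auto
        have Ysub: "Ysel X \<subseteq> ?Y1 \<union> ?Y2" using that by auto
        have mV: "marg V (Ysel X) = Rs (Ysel X)" using that V by auto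
        have "marg V' X = marg V' (X \<inter> W)"
          by (rule marg_Int) (use undef[OF kV'] in auto)
        also have "\<dots> = marg V (X \<inter> W)"
          unfolding V'_def by (rule marg_marg[OF finV]) (use that in auto)
        also have "\<dots> = marg (marg V (Ysel X)) (X \<inter> W)"
          by (rule marg_marg[OF finV Ysel(2)[OF XE], symmetric])
        also have "\<dots> = Rs' X" unfolding Rs'_def mV ..
        finally show ?thesis .
      qed
      show "\<exists>W'. is_krel D' (X1 \<union> X2) W' \<and> marg W' X1 = Rs' X1 \<and> marg W' X2 = Rs' X2"
        using kV' mV' krelD' by blast
    qed
    from assms(3)[unfolded local_to_global_def, rule_format, OF A1[rule_format] A2]
    obtain G where G: "is_krel D' (\<Union>(snd H)) G" "\<forall>X\<in>snd H. marg G X = Rs' X"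
      unfolding globally_consistent_def by blast
    have kG: "is_krel D ((\<Union>E) \<inter> W) G" using G(1) krelD' by (simp add: E_def)
    have finG: "finite (supp G)" using kG by (simp add: is_krel_def)
    have sub: "\<Union>Er \<subseteq> (\<Union>E) \<inter> W" using ErEi by (auto simp: Ei_def)
    show ?thesis unfolding Er_eq globally_consistent_def
    proof (intro exI conjI ballI)
      show "is_krel D (\<Union>Er) (marg G (\<Union>Er))" by (rule krel_marg[OF kG sub])
      fix Y assume Y: "Y \<in> Er"
      then obtain X where X: "X \<in> E" "Y = X \<inter> W" using ErEi by (auto simp: Ei_def)
      have "marg (marg G (\<Union>Er)) Y = marg G Y"
        by (rule marg_marg[OF finG]) (use Y in auto)
      also have "\<dots> = marg G X"
        unfolding X(2) by (rule marg_Int[symmetric]) (use undef[OF kG] in auto)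
      also have "\<dots> = Rs' X" using G(2) X(1) by (simp add: E_def)
      also have "\<dots> = marg (Rs Y) Y"
        unfolding Rs'_def using Ysel_eq[OF X(1)] Y X(2) by simp
      also have "\<dots> = Rs Y" by (rule marg_self[OF krel[OF Y]])
      finally show "marg (marg G (\<Union>Er)) Y = Rs Y" .
    qed
  qed
qed

end
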